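(* Let $\mathcal{F}=\{f_1,\dots,f_{M_1}\}$ be a collection of polynomials on $\mathbb{R}^n$ satisfying property $R$. For $\varpi\in\mathbb{R}^n$ let $P^\varpi(z)=z-\varpi$. Then for any probability measure $\mu$ on $\mathbb{R}^n$, $\mu\in\mathbb{M}^{pc}_{\mathcal{F}}(\varpi)$ if and only if $(P^\varpi)_\sharp\mu\in\mathbb{M}^{pc}_{\mathcal{F}}(0)$.
   Context: $\mathcal{L}(\mathcal{F})=\{\sum_i\lambda_if_i+\lambda_0:f_i\in\mathcal{F},\lambda_i\in\mathbb{R}\}$; $\mathcal{F}$ satisfies property $R$ if $z\mapsto f(z-z_0)$ lies in $\mathcal{L}(\mathcal{F})$ for every $f\in\mathcal{F}$ and $z_0\in\mathbb{R}^n$. $\mathbb{M}^{pc}_{\mathcal{F}}(\varpi)$ is the set of probability measures $\mu$ on $\mathbb{R}^n$ with $\int z\,d\mu=\varpi$ and $\int f\,d\mu=f(\int z\,d\mu)$ for all $f\in\mathcal{F}$. $(P^\varpi)_\sharp\mu$ denotes the push-forward of $\mu$ under $P^\varpi$. *)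

theory Defs
  imports "HOL-Analysis.Analysis" "HOL-Probability.Probability"
begin

definition lin_span_const :: "(real^'n \<Rightarrow> real) set \<Rightarrow> (real^'n \<Rightarrow> real) set" where
  "lin_span_const F = {g. \<exists>S c lam0. finite S \<and> S \<subseteq> F \<and>
      g = (\<lambda>z. (\<Sum>f\<in>S. c f * f z) + lam0)}"

definition property_R :: "(real^'n \<Rightarrow> real) set \<Rightarrow> bool" where
  "property_R F \<longleftrightarrow> (\<forall>f\<in>F. \<forall>z0. (\<lambda>z. f (z - z0)) \<in> lin_span_const F)"

definition Mpc :: "(real^'n \<Rightarrow> real) set \<Rightarrow> real^'n \<Rightarrow> (real^'n) measure set" where
  "Mpc F w = {\<mu>. prob_space \<mu> \<and> sets \<mu> = sets borel \<and>
      integrable \<mu> (\<lambda>z. z) \<and> (\<integral>z. z \<partial>\<mu>) = w \<and>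
      (\<forall>f\<in>F. integrable \<mu> f \<and> (\<integral>z. f z \<partial>\<mu>) = f (\<integral>z. z \<partial>\<mu>))}"

end

theory Submission
  imports Defs
begin

lemma span_int:
  fixes F :: "(real^'n \<Rightarrow> real) set" and M :: "(real^'n) measure"
  assumes "prob_space M"
    and F: "\<forall>g\<in>F. integrable M g \<and> (\<integral>z. g z \<partial>M) = g b"
    and h: "h \<in> lin_span_const F"
  shows "integrable M h \<and> (\<integral>z. h z \<partial>M) = h b"
proof -
  interpret prob_space M by fact
  obtain S c lam0 where S: "finite S" "S \<subseteq> F" and hd: "h = (\<lambda>z. (\<Sum>f\<in>S. c f * f z) + lam0)"
    using h unfolding lin_span_const_def by blast
  have i1: "integrable M (\<lambda>z. \<Sum>f\<in>S. c f * f z)"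
    using S F by (intro Bochner_Integration.integrable_sum) auto
  have i: "integrable M h" unfolding hd using i1 by simp
  have "(\<integral>z. h z \<partial>M) = (\<integral>z. (\<Sum>f\<in>S. c f * f z) \<partial>M) + lam0"
    unfolding hd using i1 by (subst Bochner_Integration.integral_add) (auto simp: prob_space)
  also have "(\<integral>z. (\<Sum>f\<in>S. c f * f z) \<partial>M) = (\<Sum>f\<in>S. c f * (\<integral>z. f z \<partial>M))"
    using S F by (subst Bochner_Integration.integral_sum) auto
  also have "\<dots> = (\<Sum>f\<in>S. c f * f b)" using S F by (intro sum.cong) auto
  finally show ?thesis using i hd by simp
qed

theorem lemma18:
  fixes F :: "(real^'n \<Rightarrow> real) set" and w :: "real^'n" and \<mu> :: "(real^'n) measure"
  assumes "finite F"
    and "\<forall>f\<in>F. polynomial_function f"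
    and R: "property_R F"
    and P: "prob_space \<mu>" and S: "sets \<mu> = sets borel"
  shows "\<mu> \<in> Mpc F w \<longleftrightarrow> distr \<mu> borel (\<lambda>z. z - w) \<in> Mpc F 0"
proof -
  interpret prob_space \<mu> by fact
  define \<nu> where "\<nu> = distr \<mu> borel (\<lambda>z. z - w)"
  have mT: "(\<lambda>z. z - w) \<in> measurable \<mu> borel"
    using S by (simp add: measurable_cong_sets[OF S refl])
  have Pn: "prob_space \<nu>" unfolding \<nu>_def using mT by (rule prob_space_distr)
  have Sn: "sets \<nu> = sets borel" unfolding \<nu>_def by simp
  have intE: "integrable \<nu> g \<longleftrightarrow> integrable \<mu> (\<lambda>z. g (z - w))"
    if "g \<in> borel_measurable borel" for g :: "real^'n \<Rightarrow> 'b::{banach,second_countable_topology}"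
    unfolding \<nu>_def using mT that by (rule integrable_distr_eq)
  have intI: "(\<integral>z. g z \<partial>\<nu>) = (\<integral>z. g (z - w) \<partial>\<mu>)"
    if "g \<in> borel_measurable borel" for g :: "real^'n \<Rightarrow> 'b::{banach,second_countable_topology}"
    unfolding \<nu>_def using mT that by (rule integral_distr)
  have mmu: "g \<in> borel_measurable borel" if "integrable \<mu> g" for g :: "real^'n \<Rightarrow> real"
    using borel_measurable_integrable[OF that] measurable_cong_sets[OF S refl] by blast
  have mnu: "g \<in> borel_measurable borel" if "integrable \<nu> g" for g :: "real^'n \<Rightarrow> real"
    using borel_measurable_integrable[OF that] measurable_cong_sets[OF Sn refl] by blast
  have idm: "(\<lambda>z::real^'n. z) \<in> borel_measurable borel" by simp
  have cint: "integrable \<mu> (\<lambda>z. w)" by simp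
  have idiff: "integrable \<mu> (\<lambda>z. z) \<longleftrightarrow> integrable \<mu> (\<lambda>z. z - w)"
  proof
    assume "integrable \<mu> (\<lambda>z. z)" thus "integrable \<mu> (\<lambda>z. z - w)"
      using cint by (rule Bochner_Integration.integrable_diff)
  next
    assume a: "integrable \<mu> (\<lambda>z. z - w)"
    have "integrable \<mu> (\<lambda>z. (z - w) + w)" using a cint by (rule Bochner_Integration.integrable_add)
    thus "integrable \<mu> (\<lambda>z. z)" by simp
  qed
  have bar: "integrable \<mu> (\<lambda>z. z) \<Longrightarrow> (\<integral>z. z \<partial>\<nu>) = (\<integral>z. z \<partial>\<mu>) - w"
    using intI[OF idm] cint
    by (simp add: Bochner_Integration.integral_diff prob_space)
  show ?thesis
  proof
    assume A: "\<mu> \<in> Mpc F w"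
    hence iz: "integrable \<mu> (\<lambda>z. z)" and bz: "(\<integral>z. z \<partial>\<mu>) = w"
      and Fm: "\<forall>g\<in>F. integrable \<mu> g \<and> (\<integral>z. g z \<partial>\<mu>) = g w"
      unfolding Mpc_def by auto
    have "\<nu> \<in> Mpc F 0"
      unfolding Mpc_def
    proof (intro CollectI conjI ballI Pn Sn)
      show "integrable \<nu> (\<lambda>z. z)" using intE[OF idm] idiff iz by simp
      show b0: "(\<integral>z. z \<partial>\<nu>) = 0" using bar[OF iz] bz by simp
      fix f assume f: "f \<in> F"
      have h: "(\<lambda>z. f (z - w)) \<in> lin_span_const F" using R f unfolding property_R_def by blast
      have H: "integrable \<mu> (\<lambda>z. f (z - w)) \<and> (\<integral>z. f (z - w) \<partial>\<mu>) = f (w - w)"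
        using span_int[OF P Fm h] by simp
      have fm: "f \<in> borel_measurable borel" using Fm f mmu by blast
      show "integrable \<nu> f" using intE[OF fm] H by simp
      show "(\<integral>z. f z \<partial>\<nu>) = f (\<integral>z. z \<partial>\<nu>)" using intI[OF fm] H b0 by simp
    qed
    thus "distr \<mu> borel (\<lambda>z. z - w) \<in> Mpc F 0" unfolding \<nu>_def .
  next
    assume "distr \<mu> borel (\<lambda>z. z - w) \<in> Mpc F 0"
    hence B: "\<nu> \<in> Mpc F 0" unfolding \<nu>_def .
    hence izn: "integrable \<nu> (\<lambda>z. z)" and bzn: "(\<integral>z. z \<partial>\<nu>) = 0"
      and Fn: "\<forall>g\<in>F. integrable \<nu> g \<and> (\<integral>z. g z \<partial>\<nu>) = g 0"
      unfolding Mpc_def by auto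
    have iz: "integrable \<mu> (\<lambda>z. z)" using izn intE[OF idm] idiff by simp
    have bz: "(\<integral>z. z \<partial>\<mu>) = w" using bar[OF iz] bzn by simp
    show "\<mu> \<in> Mpc F w"
      unfolding Mpc_def
    proof (intro CollectI conjI ballI P S iz bz)
      fix f assume f: "f \<in> F"
      have h: "(\<lambda>z. f (z - (- w))) \<in> lin_span_const F" using R f unfolding property_R_def by blast
      have H: "integrable \<nu> (\<lambda>z. f (z - (- w))) \<and> (\<integral>z. f (z - (- w)) \<partial>\<nu>) = f (0 - (- w))"
        using span_int[OF Pn Fn h] by simp
      have hm: "(\<lambda>z. f (z - (- w))) \<in> borel_measurable borel" using H mnu by blast
      have e: "(\<lambda>z. f (z - w - (- w))) = f" by simp
      show "integrable \<mu> f" using intE[OF hm] H e by simp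
      show "(\<integral>z. f z \<partial>\<mu>) = f (\<integral>z. z \<partial>\<mu>)" using intI[OF hm] H e bz by simp
    qed
  qed
qed

end
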